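(* For non-negative integers $n,k,\alpha,\beta$, $$\genfrac{\lfloor}{\rfloor}{0pt}{}{n+k}{n}^{\alpha,\beta}=\sum_{1\le i_1\le i_2\le\cdots\le i_k\le n}\ \prod_{j=1}^{k}\big((\alpha+\beta)i_j+\alpha(j-1)\big)=\sum_{1\le i_1\le\cdots\le i_k\le n}(\alpha+\beta)i_1\big((\alpha+\beta)i_2+\alpha\big)\cdots\big((\alpha+\beta)i_k+\alpha(k-1)\big).$$
   Context: For parameters $\alpha,\beta$, the generalized Stirling numbers $\genfrac{\lfloor}{\rfloor}{0pt}{}{n}{k}^{\alpha,\beta}$, $0\le k\le n$, are defined by the polynomial identity in $x$ $$x(x+\alpha)\cdots(x+(n-1)\alpha)=\sum_{k=0}^{n}\genfrac{\lfloor}{\rfloor}{0pt}{}{n}{k}^{\alpha,\beta}\,x(x-\beta)\cdots(x-(k-1)\beta),$$ (empty products equal $1$), and $\genfrac{\lfloor}{\rfloor}{0pt}{}{n}{k}^{\alpha,\beta}=0$ for $k<0$ or $k>n$. An empty sum is $0$ and an empty product is $1$ (so for $k=0$ the right-hand side equals $1$). *)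

theory Defs
  imports Complex_Main
begin

definition gstirling :: "real \<Rightarrow> real \<Rightarrow> nat \<Rightarrow> nat \<Rightarrow> real" where
  "gstirling a b n k =
     (if k \<le> n then
        (THE c :: nat \<Rightarrow> real.
            (\<forall>x::real. (\<Prod>i<n. x + real i * a) = (\<Sum>j\<le>n. c j * (\<Prod>i<j. x - real i * b)))
          \<and> (\<forall>j>n. c j = 0)) k
      else 0)"

definition weak_seqs :: "nat \<Rightarrow> nat \<Rightarrow> (nat \<Rightarrow> nat) set" where
  "weak_seqs k n = {i. (\<forall>j\<in>{1..k}. 1 \<le> i j \<and> i j \<le> n)
                      \<and> (\<forall>j\<in>{1..<k}. i j \<le> i (Suc j))
                      \<and> (\<forall>j. j \<notin> {1..k} \<longrightarrow> i j = 0)}"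

end

theory Submission
  imports Defs "HOL-Computational_Algebra.Polynomial"
begin

fun SS :: "real \<Rightarrow> real \<Rightarrow> nat \<Rightarrow> nat \<Rightarrow> real" where
  "SS a b 0 k = (if k = 0 then 1 else 0)"
| "SS a b (Suc n) k = (case k of 0 \<Rightarrow> 0 | Suc k' \<Rightarrow> SS a b n k') + (real k * b + real n * a) * SS a b n k"

lemma SS_zero: "k > n \<Longrightarrow> SS a b n k = 0"
  by (induction n arbitrary: k) (auto split: nat.splits)

lemma SS_diag: "SS a b n n = 1"
  by (induction n) (auto simp: SS_zero)

lemma SS_0: "SS a b (Suc n) 0 = 0"
  by (induction n) auto

lemma SS_expand:
  "(\<Prod>i<n. x + real i * a) = (\<Sum>j\<le>n. SS a b n j * (\<Prod>i<j. x - real i * b))"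
proof (induction n)
  case 0
  then show ?case by simp
next
  case (Suc n)
  define P where "P j = (\<Prod>i<j. x - real i * b)" for j
  have "(\<Prod>i<Suc n. x + real i * a) = (\<Sum>j\<le>n. SS a b n j * P j) * (x + real n * a)"
    using Suc by (simp add: P_def)
  also have "\<dots> = (\<Sum>j\<le>n. SS a b n j * P (Suc j)) + (\<Sum>j\<le>n. (real j * b + real n * a) * SS a b n j * P j)"
  proof -
    have "(\<Sum>j\<le>n. SS a b n j * P j) * (x + real n * a) = (\<Sum>j\<le>n. SS a b n j * P j * (x + real n * a))"
      by (simp add: sum_distrib_right)
    also have "\<dots> = (\<Sum>j\<le>n. SS a b n j * P (Suc j) + (real j * b + real n * a) * SS a b n j * P j)"
      by (rule sum.cong) (simp_all add: P_def algebra_simps)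
    finally show ?thesis by (simp add: sum.distrib)
  qed
  also have "(\<Sum>j\<le>n. SS a b n j * P (Suc j)) = (\<Sum>j\<le>Suc n. (case j of 0 \<Rightarrow> 0 | Suc k' \<Rightarrow> SS a b n k') * P j)"
    by (subst sum.atMost_Suc_shift) simp
  also have "(\<Sum>j\<le>n. (real j * b + real n * a) * SS a b n j * P j) = (\<Sum>j\<le>Suc n. (real j * b + real n * a) * SS a b n j * P j)"
    by (simp add: SS_zero)
  finally show ?case
    by (simp add: P_def sum.distrib[symmetric] algebra_simps)
qed

lemma uniq:
  fixes d :: "nat \<Rightarrow> real"
  shows "(\<forall>x::real. (\<Sum>j\<le>N. d j * (\<Prod>i<j. x - real i * b)) = 0) \<Longrightarrow> j \<le> N \<Longrightarrow> d j = 0"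
proof (induction N arbitrary: j)
  case 0
  then show ?case by simp
next
  case (Suc N)
  define pp where "pp j = (\<Prod>i<j. [:- (real i * b), 1:])" for j
  have deg: "degree (pp j) = j" for j
    unfolding pp_def by (subst degree_prod_sum_eq) auto
  have lc: "lead_coeff (pp j) = 1" for j
    unfolding pp_def by (simp add: lead_coeff_prod)
  have cf: "coeff (pp j) (Suc N) = (if j = Suc N then 1 else 0)" if "j \<le> Suc N" for j
    using that deg[of j] lc[of j] by (auto intro: coeff_eq_0)
  define Q where "Q = (\<Sum>j\<le>Suc N. smult (d j) (pp j))"
  have "poly Q x = 0" for x
  proof -
    have pp: "poly (pp j) x = (\<Prod>i<j. x - real i * b)" for j
      unfolding pp_def poly_prod by simp
    have "poly Q x = (\<Sum>j\<le>Suc N. d j * (\<Prod>i<j. x - real i * b))"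
      unfolding Q_def poly_sum poly_smult pp ..
    then show ?thesis using Suc.prems(1) by simp
  qed
  then have "Q = 0" using poly_all_0_iff_0 by blast
  then have "coeff Q (Suc N) = 0" by simp
  moreover have "coeff Q (Suc N) = d (Suc N)"
    unfolding Q_def coeff_sum by (simp add: cf)
  ultimately have dS: "d (Suc N) = 0" by simp
  have "\<forall>x::real. (\<Sum>j\<le>N. d j * (\<Prod>i<j. x - real i * b)) = 0"
    using Suc.prems(1) dS by simp
  with Suc.IH[of j] Suc.IH show ?case using Suc.prems(2) dS
    by (cases "j = Suc N") auto
qed

lemma gstirling_SS: "k \<le> n \<Longrightarrow> gstirling a b n k = SS a b n k"
proof -
  assume kn: "k \<le> n"
  let ?P = "\<lambda>c :: nat \<Rightarrow> real. (\<forall>x::real. (\<Prod>i<n. x + real i * a) = (\<Sum>j\<le>n. c j * (\<Prod>i<j. x - real i * b)))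
          \<and> (\<forall>j>n. c j = 0)"
  have "(THE c. ?P c) = SS a b n"
  proof (rule the_equality)
    show "?P (SS a b n)" using SS_expand SS_zero by blast
  next
    fix c assume c: "?P c"
    show "c = SS a b n"
    proof
      fix j
      show "c j = SS a b n j"
      proof (cases "j \<le> n")
        case True
        have "\<forall>x::real. (\<Sum>j\<le>n. (c j - SS a b n j) * (\<Prod>i<j. x - real i * b)) = 0"
          using c SS_expand[where a=a and b=b and n=n] by (simp add: left_diff_distrib sum_subtractf)
        from uniq[OF this True] show ?thesis by simp
      next
        case False
        then show ?thesis using c SS_zero by auto
      qed
    qed
  qed
  then show ?thesis using kn by (simp add: gstirling_def)
qed


lemma ws_finite: "finite (weak_seqs k n)"
proof (rule finite_subset)
  show "weak_seqs k n \<subseteq> {f. \<forall>x. (x \<in> {1..k} \<longrightarrow> f x \<in> {0..n}) \<and> (x \<notin> {1..k} \<longrightarrow> f x = 0)}"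
    unfolding weak_seqs_def by auto
  show "finite {f. \<forall>x. (x \<in> {1..k} \<longrightarrow> f x \<in> {0..n}) \<and> (x \<notin> {1..k} \<longrightarrow> f x = (0::nat))}"
    by (rule finite_set_of_finite_funs) auto
qed

lemma ws_mono: assumes "i \<in> weak_seqs k n" "1 \<le> j" "j \<le> j'" "j' \<le> k" shows "i j \<le> i j'"
  using assms(3,4)
proof (induction j' rule: dec_induct)
  case base then show ?case by simp
next
  case (step m)
  then have "m \<in> {1..<k}" using assms(2) by auto
  then have "i m \<le> i (Suc m)" using assms(1) unfolding weak_seqs_def by blast
  with step show ?case by simp
qed

lemma ws_0: "weak_seqs 0 n = {\<lambda>_. 0}"
  unfolding weak_seqs_def by auto

lemma ws_Suc_0: "weak_seqs (Suc k) 0 = {}"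
  unfolding weak_seqs_def by force

lemma ws_split: "weak_seqs (Suc k) (Suc m) = weak_seqs (Suc k) m \<union> (\<lambda>f. f(Suc k := Suc m)) ` weak_seqs k (Suc m)"
proof (intro equalityI subsetI)
  fix i assume i: "i \<in> weak_seqs (Suc k) (Suc m)"
  show "i \<in> weak_seqs (Suc k) m \<union> (\<lambda>f. f(Suc k := Suc m)) ` weak_seqs k (Suc m)"
  proof (cases "i (Suc k) = Suc m")
    case False
    have "i (Suc k) \<le> Suc m" using i unfolding weak_seqs_def by auto
    then have le: "i (Suc k) \<le> m" using False by simp
    have "i j \<le> m" if "j \<in> {1..Suc k}" for j
      using ws_mono[OF i, of j "Suc k"] that le by auto
    then have "i \<in> weak_seqs (Suc k) m" using i unfolding weak_seqs_def by auto
    then show ?thesis by simp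
  next
    case True
    have "i(Suc k := 0) \<in> weak_seqs k (Suc m)" using i unfolding weak_seqs_def by auto
    moreover have "i = (i(Suc k := 0))(Suc k := Suc m)" using True by auto
    ultimately show ?thesis by blast
  qed
next
  fix i assume "i \<in> weak_seqs (Suc k) m \<union> (\<lambda>f. f(Suc k := Suc m)) ` weak_seqs k (Suc m)"
  then show "i \<in> weak_seqs (Suc k) (Suc m)"
  proof
    assume "i \<in> weak_seqs (Suc k) m" then show ?thesis unfolding weak_seqs_def by auto
  next
    assume "i \<in> (\<lambda>f. f(Suc k := Suc m)) ` weak_seqs k (Suc m)"
    then obtain f where f: "f \<in> weak_seqs k (Suc m)" and i: "i = f(Suc k := Suc m)" by blast
    have "f j \<le> Suc m" if "j \<in> {1..k}" for j using f that unfolding weak_seqs_def by auto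
    note fd = f[unfolded weak_seqs_def, simplified]
    have c1: "\<forall>j\<in>{1..Suc k}. 1 \<le> i j \<and> i j \<le> Suc m"
    proof
      fix j assume j: "j \<in> {1..Suc k}"
      show "1 \<le> i j \<and> i j \<le> Suc m"
      proof (cases "j = Suc k")
        case True then show ?thesis by (simp add: i)
      next
        case False then have "j \<in> {1..k}" using j by auto
        then show ?thesis using fd False by (simp add: i)
      qed
    qed
    have c2: "\<forall>j\<in>{1..<Suc k}. i j \<le> i (Suc j)"
    proof
      fix j assume j: "j \<in> {1..<Suc k}"
      show "i j \<le> i (Suc j)"
      proof (cases "j = k")
        case True then show ?thesis using fd j by (simp add: i)
      next
        case False then have "j \<in> {1..<k}" using j by auto
        then show ?thesis using fd False j by (simp add: i)
      qed
    qed
    have c3: "\<forall>j. j \<notin> {1..Suc k} \<longrightarrow> i j = 0"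
      using fd by (auto simp: i)
    show ?thesis unfolding weak_seqs_def using c1 c2 c3 by blast
  qed
qed

definition RR :: "nat \<Rightarrow> nat \<Rightarrow> nat \<Rightarrow> nat \<Rightarrow> nat" where
  "RR \<alpha> \<beta> n k = (\<Sum>i\<in>weak_seqs k n. \<Prod>j=1..k. (\<alpha> + \<beta>) * i j + \<alpha> * (j - 1))"

lemma RR_0: "RR \<alpha> \<beta> n 0 = 1"
  unfolding RR_def ws_0 by simp

lemma RR_Suc_0: "RR \<alpha> \<beta> 0 (Suc k) = 0"
  unfolding RR_def ws_Suc_0 by simp

lemma RR_rec: "RR \<alpha> \<beta> (Suc m) (Suc k) = RR \<alpha> \<beta> m (Suc k) + ((\<alpha> + \<beta>) * Suc m + \<alpha> * k) * RR \<alpha> \<beta> (Suc m) k"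
proof -
  let ?g = "\<lambda>i. \<Prod>j=1..Suc k. (\<alpha> + \<beta>) * i j + \<alpha> * (j - 1)"
  have disj: "weak_seqs (Suc k) m \<inter> (\<lambda>f. f(Suc k := Suc m)) ` weak_seqs k (Suc m) = {}"
  proof (rule ccontr)
    assume "\<not> ?thesis"
    then obtain f where f1: "f(Suc k := Suc m) \<in> weak_seqs (Suc k) m" by blast
    then have "\<forall>j\<in>{1..Suc k}. 1 \<le> (f(Suc k := Suc m)) j \<and> (f(Suc k := Suc m)) j \<le> m"
      unfolding weak_seqs_def by simp
    note b = bspec[OF this, of "Suc k"]
    have "(f(Suc k := Suc m)) (Suc k) \<le> m" using b by simp
    then show False by simp
  qed
  have inj: "inj_on (\<lambda>f. f(Suc k := Suc m)) (weak_seqs k (Suc m))"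
  proof
    fix f g assume f: "f \<in> weak_seqs k (Suc m)" and g: "g \<in> weak_seqs k (Suc m)"
      and e: "f(Suc k := Suc m) = g(Suc k := Suc m)"
    have "f (Suc k) = 0" "g (Suc k) = 0" using f g unfolding weak_seqs_def by auto
    then show "f = g"
    proof (intro ext)
      fix x show "f x = g x" using fun_cong[OF e, of x] \<open>f (Suc k) = 0\<close> \<open>g (Suc k) = 0\<close>
        by (cases "x = Suc k") auto
    qed
  qed
  have "RR \<alpha> \<beta> (Suc m) (Suc k) = sum ?g (weak_seqs (Suc k) m) + sum ?g ((\<lambda>f. f(Suc k := Suc m)) ` weak_seqs k (Suc m))"
    unfolding RR_def ws_split by (rule sum.union_disjoint) (auto simp: ws_finite disj)
  also have "sum ?g ((\<lambda>f. f(Suc k := Suc m)) ` weak_seqs k (Suc m))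
      = (\<Sum>f\<in>weak_seqs k (Suc m). ?g (f(Suc k := Suc m)))"
    by (rule sum.reindex[OF inj, unfolded comp_def])
  also have "\<dots> = (\<Sum>f\<in>weak_seqs k (Suc m). ((\<alpha> + \<beta>) * Suc m + \<alpha> * k) * (\<Prod>j=1..k. (\<alpha> + \<beta>) * f j + \<alpha> * (j - 1)))"
  proof (rule sum.cong[OF refl])
    fix f assume f: "f \<in> weak_seqs k (Suc m)"
    have "?g (f(Suc k := Suc m)) = (\<Prod>j=1..k. (\<alpha> + \<beta>) * (f(Suc k := Suc m)) j + \<alpha> * (j - 1)) * ((\<alpha> + \<beta>) * Suc m + \<alpha> * k)"
      by (simp add: prod.cl_ivl_Suc)
    also have "(\<Prod>j=1..k. (\<alpha> + \<beta>) * (f(Suc k := Suc m)) j + \<alpha> * (j - 1)) = (\<Prod>j=1..k. (\<alpha> + \<beta>) * f j + \<alpha> * (j - 1))"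
      by (rule prod.cong) auto
    finally show "?g (f(Suc k := Suc m)) = ((\<alpha> + \<beta>) * Suc m + \<alpha> * k) * (\<Prod>j=1..k. (\<alpha> + \<beta>) * f j + \<alpha> * (j - 1))"
      by simp
  qed
  also have "\<dots> = ((\<alpha> + \<beta>) * Suc m + \<alpha> * k) * RR \<alpha> \<beta> (Suc m) k"
    unfolding RR_def by (simp add: sum_distrib_left)
  finally show ?thesis unfolding RR_def by simp
qed

lemma SS_RR: "SS (real \<alpha>) (real \<beta>) (n + k) n = real (RR \<alpha> \<beta> n k)"
proof (induction k arbitrary: n)
  case 0
  then show ?case by (simp add: SS_diag RR_0)
next
  case (Suc k)
  note IHk = Suc.IH
  show ?case
  proof (induction n)
    case 0
    then show ?case by (simp add: RR_Suc_0 del: SS.simps) (simp add: SS_0 del: SS.simps)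
  next
    case (Suc m)
    have e1: "Suc m + Suc k = Suc (m + Suc k)" "m + Suc k = Suc m + k" by simp_all
    have "SS (real \<alpha>) (real \<beta>) (Suc m + Suc k) (Suc m)
        = SS (real \<alpha>) (real \<beta>) (m + Suc k) m + (real (Suc m) * real \<beta> + real (m + Suc k) * real \<alpha>) * SS (real \<alpha>) (real \<beta>) (m + Suc k) (Suc m)"
      unfolding e1(1) by (simp only: SS.simps nat.case)
    also have "\<dots> = real (RR \<alpha> \<beta> m (Suc k)) + (real (Suc m) * real \<beta> + real (m + Suc k) * real \<alpha>) * real (RR \<alpha> \<beta> (Suc m) k)"
      using Suc.IH IHk[of "Suc m"] unfolding e1(2) by simp
    also have "\<dots> = real (RR \<alpha> \<beta> (Suc m) (Suc k))"
      unfolding RR_rec by (simp add: algebra_simps)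
    finally show ?case .
  qed
qed

theorem theorem6:
  fixes n k \<alpha> \<beta> :: nat
  shows "gstirling (real \<alpha>) (real \<beta>) (n + k) n
           = real (\<Sum>i\<in>weak_seqs k n. \<Prod>j=1..k. (\<alpha> + \<beta>) * i j + \<alpha> * (j - 1))"
  using gstirling_SS[of n "n + k"] SS_RR[of \<alpha> \<beta> n k] unfolding RR_def by simp

end
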